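(* Let $X=\{0,1\}^{\mathbb{Z}}$. Then the topological full group $\llbracket X\rrbracket$ is a subgroup of the Brin–Thompson group $2V$.
   Context: For a subshift $X\subseteq\Sigma^{\mathbb{Z}}$ with shift map $\sigma(x)_i=x_{i+1}$, the topological full group $\llbracket X\rrbracket$ is the group of all homeomorphisms $f:X\to X$ for which there is a continuous function $c:X\to\mathbb{Z}$ (the cocycle of $f$) with $f(x)=\sigma^{c(x)}(x)$ for all $x\in X$. Configurations of $\{0,1\}^{\mathbb{Z}}$ are written $x.y$ with $x\in\{0,1\}^{(-\infty,-1]}$, $y\in\{0,1\}^{\mathbb{N}}$, the coordinate right after the point being coordinate $0$. The Brin–Thompson group $2V$ is (here) the group of all homeomorphisms $f:\{0,1\}^{\mathbb{Z}}\to\{0,1\}^{\mathbb{Z}}$ for which there exist $n\in\mathbb{N}$ and a map assigning to each pair $(u,v)$ with $u\in\{0,1\}^n$, $v\in\{0,1\}^{n+1}$ a pair of finite words $(u',v')$, such that $f(xu.vy)=xu'.v'y$ for all left-infinite $x$ and right-infinite $y$. *)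

theory Defs
  imports "HOL-Analysis.Analysis"
begin

text \<open>Configurations of the full shift X = {0,1}^Z, with 0/1 encoded as False/True,
  carrying the product of discrete topologies (the Cantor topology).\<close>

type_synonym config = "int \<Rightarrow> bool"

definition cantor_top :: "config topology" where
  "cantor_top = product_topology (\<lambda>_. discrete_topology (UNIV :: bool set)) UNIV"

text \<open>Shift map: sigma(x)_i = x_(i+1); hence (sigma^k x)_i = x_(i+k) for all k in Z.\<close>

definition shift :: "int \<Rightarrow> config \<Rightarrow> config" where
  "shift k x = (\<lambda>i. x (i + k))"

definition topological_full_group :: "(config \<Rightarrow> config) set" where
  "topological_full_group =
     {f. homeomorphic_map cantor_top cantor_top f \<and>
         (\<exists>c :: config \<Rightarrow> int.
            continuous_map cantor_top (discrete_topology UNIV) c \<and>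
            (\<forall>x. f x = shift (c x) x))}"

text \<open>The configuration  x u . v y : a left-infinite word x (with x k the symbol at
  distance k+1 to the left of the beginning of u), finite words u, v, and a
  right-infinite word y; the first letter of v sits at coordinate 0.\<close>

definition cat_conf :: "(nat \<Rightarrow> bool) \<Rightarrow> bool list \<Rightarrow> bool list \<Rightarrow> (nat \<Rightarrow> bool) \<Rightarrow> config" where
  "cat_conf x u v y = (\<lambda>i.
     if 0 \<le> i then
       (if nat i < length v then v ! nat i else y (nat i - length v))
     else
       (let k = nat (- i - 1) in
         if k < length u then u ! (length u - 1 - k) else x (k - length u)))"

definition brin_thompson_2V :: "(config \<Rightarrow> config) set" where
  "brin_thompson_2V =
     {f. homeomorphic_map cantor_top cantor_top f \<and>
         (\<exists>(n::nat) (g :: bool list \<Rightarrow> bool list \<Rightarrow> bool list \<times> bool list).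
            \<forall>x u v y. length u = n \<longrightarrow> length v = n + 1 \<longrightarrow>
              f (cat_conf x u v y) = cat_conf x (fst (g u v)) (snd (g u v)) y)}"

end

theory Submission
  imports Defs
begin


lemma cat_conf_alt:
  "cat_conf x u v y i =
    (let p = i + int (length u) in
     if p < 0 then x (nat (- p - 1))
     else if p < int (length (u @ v)) then (u @ v) ! nat p
     else y (nat p - length (u @ v)))"
proof (cases "0 \<le> i")
  case True
  then show ?thesis
    by (auto simp: cat_conf_def Let_def nth_append nat_add_distrib)
next
  case False
  define k where "k = nat (- i - 1)"
  have k: "i = - int k - 1" using False by (simp add: k_def)
  have kk: "nat (- i - 1) = k" using k by simp
  show ?thesis
  proof (cases "k < length u")
    case True
    then have "nat (i + int (length u)) = length u - 1 - k" using k by simp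
    then show ?thesis using True False k kk by (auto simp: cat_conf_def Let_def nth_append)
  next
    case c: False
    then have "nat (- (i + int (length u)) - 1) = k - length u" using k by simp
    then show ?thesis using c False k kk by (auto simp: cat_conf_def Let_def nth_append)
  qed
qed



lemma shift_cat:
  assumes "0 \<le> int (length u) + k" "int (length u) + k \<le> int (length (u @ v))"
  shows "shift k (cat_conf x u v y) =
     cat_conf x (take (nat (int (length u) + k)) (u @ v)) (drop (nat (int (length u) + k)) (u @ v)) y"
proof
  fix i
  define j where "j = nat (int (length u) + k)"
  have j: "int j = int (length u) + k" "j \<le> length (u @ v)" using assms by (auto simp: j_def)
  have l: "length (take j (u @ v)) = j"
    using j by simp
  have td: "take j (u @ v) @ drop j (u @ v) = u @ v" by (rule append_take_drop_id)
  show "shift k (cat_conf x u v y) i = cat_conf x (take (nat (int (length u) + k)) (u @ v)) (drop (nat (int (length u) + k)) (u @ v)) y i"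
    unfolding j_def[symmetric] shift_def cat_conf_alt[of x u] cat_conf_alt[of x "take _ _"] l td
    using j(1) by (simp add: algebra_simps)
qed

lemma window_eq:
  assumes "length u = n" "length v = n + 1" "\<bar>i\<bar> \<le> int n"
  shows "cat_conf x u v y i = cat_conf x' u v y' i"
  using assms unfolding cat_conf_alt[of x] cat_conf_alt[of x'] by (auto simp: Let_def)

lemma topspace_cantor: "topspace cantor_top = UNIV"
  unfolding cantor_top_def by auto

lemma window:
  assumes c: "continuous_map cantor_top (discrete_topology UNIV) (c :: config \<Rightarrow> int)"
  obtains N :: nat where "\<And>z w. (\<forall>i. \<bar>i\<bar> \<le> int N \<longrightarrow> w i = z i) \<Longrightarrow> c w = c z"
proof -
  define A where "A N = {z. \<forall>w. (\<forall>i. \<bar>i\<bar> \<le> int N \<longrightarrow> w i = z i) \<longrightarrow> c w = c z}" for N :: nat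
  have mono: "A n \<subseteq> A m" if "n \<le> m" for n m
  proof
    fix z assume z: "z \<in> A n"
    show "z \<in> A m" unfolding A_def
    proof (intro CollectI allI impI)
      fix w assume w: "\<forall>i. \<bar>i\<bar> \<le> int m \<longrightarrow> w i = z i"
      have "\<forall>i. \<bar>i\<bar> \<le> int n \<longrightarrow> w i = z i"
      proof (intro allI impI)
        fix i assume "\<bar>i\<bar> \<le> int n"
        then have "\<bar>i\<bar> \<le> int m" using that by linarith
        then show "w i = z i" using w by blast
      qed
      then show "c w = c z" using z unfolding A_def by blast
    qed
  qed
  have opn: "openin cantor_top (A N)" for N
    unfolding cantor_top_def openin_product_topology_alt
  proof
    fix z assume z: "z \<in> A N"
    define U where "U i = (if \<bar>i\<bar> \<le> int N then {z i} else UNIV)" for i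
    have fin: "finite {i \<in> UNIV. U i \<noteq> topspace (discrete_topology UNIV)}"
      by (rule finite_subset[of _ "{- int N..int N}"]) (auto simp: U_def)
    have sub: "Pi\<^sub>E UNIV U \<subseteq> A N"
    proof
      fix z' assume "z' \<in> Pi\<^sub>E UNIV U"
      then have z'U: "\<And>i. z' i \<in> U i" by (simp add: PiE_iff)
      have agree: "\<forall>i. \<bar>i\<bar> \<le> int N \<longrightarrow> z' i = z i"
      proof (intro allI impI)
        fix i assume "\<bar>i\<bar> \<le> int N"
        then show "z' i = z i" using z'U[of i] by (simp add: U_def)
      qed
      show "z' \<in> A N" unfolding A_def
      proof (safe)
        fix w assume "\<forall>i. \<bar>i\<bar> \<le> int N \<longrightarrow> w i = z' i"
        then have wz: "\<forall>i. \<bar>i\<bar> \<le> int N \<longrightarrow> w i = z i" using agree by simp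
        have zA: "\<And>w. (\<forall>i. \<bar>i\<bar> \<le> int N \<longrightarrow> w i = z i) \<Longrightarrow> c w = c z"
          using z unfolding A_def by blast
        have "c w = c z" using zA[OF wz] .
        moreover have "c z' = c z" using zA[OF agree] .
        ultimately show "c w = c z'" by simp
      qed
    qed
    show "\<exists>U. finite {i \<in> UNIV. U i \<noteq> topspace (discrete_topology UNIV)} \<and>
             (\<forall>i\<in>UNIV. openin (discrete_topology UNIV) (U i)) \<and> z \<in> Pi\<^sub>E UNIV U \<and> Pi\<^sub>E UNIV U \<subseteq> A N"
      using fin sub by (intro exI[of _ U]) (auto simp: U_def PiE_iff)
  qed
  have cov: "\<exists>N. z \<in> A N" for z
  proof -
    have "openin cantor_top {x \<in> topspace cantor_top. c x \<in> {c z}}"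
      by (rule openin_continuous_map_preimage[OF c]) simp
    then have "openin (product_topology (\<lambda>_. discrete_topology (UNIV::bool set)) UNIV) {x. c x = c z}"
      by (simp add: topspace_cantor cantor_top_def)
    then obtain U where U: "finite {i \<in> UNIV. U i \<noteq> topspace (discrete_topology (UNIV::bool set))}"
      "z \<in> Pi\<^sub>E UNIV U" "Pi\<^sub>E UNIV U \<subseteq> {x. c x = c z}"
      unfolding openin_product_topology_alt by blast
    define F where "F = {i. U i \<noteq> UNIV}"
    have finF: "finite F" using U(1) by (simp add: F_def)
    define N where "N = Max (insert 0 ((\<lambda>i. nat \<bar>i\<bar>) ` F))"
    have NF: "\<bar>i\<bar> \<le> int N" if i: "i \<in> F" for i
    proof -
      have "nat \<bar>i\<bar> \<le> N" unfolding N_def using finF i by (intro Max_ge) auto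
      then show ?thesis by linarith
    qed
    have "z \<in> A N" unfolding A_def
    proof safe
      fix w assume w: "\<forall>i. \<bar>i\<bar> \<le> int N \<longrightarrow> w i = z i"
      have "w \<in> Pi\<^sub>E UNIV U"
      proof (simp add: PiE_iff, intro allI)
        fix i show "w i \<in> U i"
          using w NF U(2) by (cases "i \<in> F") (auto simp: F_def PiE_iff)
      qed
      then show "c w = c z" using U(3) by auto
    qed
    then show ?thesis by blast
  qed
  have cpt: "compact_space cantor_top"
    unfolding cantor_top_def compact_space_product_topology
    by (simp add: compact_space_discrete_topology)
  then obtain \<F> where F: "finite \<F>" "\<F> \<subseteq> range A" "topspace cantor_top \<subseteq> \<Union>\<F>"
  proof -
    have o: "\<forall>U\<in>range A. openin cantor_top U" using opn by auto
    have t: "topspace cantor_top \<subseteq> \<Union>(range A)" using cov topspace_cantor by auto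
    show ?thesis using compact_space_alt[THEN iffD1, rule_format, OF cpt, OF conjI[OF o t]] that by blast
  qed
  then obtain S where S: "finite S" "\<F> = A ` S"
    by (meson finite_subset_image)
  define N where "N = Max (insert 0 S)"
  have "\<And>z. z \<in> A N"
  proof -
    fix z
    obtain n where "n \<in> S" "z \<in> A n" using F(3) S(2) topspace_cantor by auto
    moreover have "n \<le> N" using S(1) \<open>n \<in> S\<close> by (simp add: N_def)
    ultimately show "z \<in> A N" using mono by blast
  qed
  then show ?thesis using that unfolding A_def by blast
qed



lemma bounded_c:
  fixes c :: "config \<Rightarrow> int"
  assumes w: "\<And>z w. (\<forall>i. \<bar>i\<bar> \<le> int N \<longrightarrow> w i = z i) \<Longrightarrow> c w = c z"
  obtains M :: nat where "\<And>w. \<bar>c w\<bar> \<le> int M"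
proof -
  define r where "r w = (\<lambda>i. i \<in> {i \<in> {- int N..int N}. w i})" for w :: config
  have cr: "c w = c (r w)" for w
    by (rule w) (auto simp: r_def)
  have "range r \<subseteq> (\<lambda>A i. i \<in> A) ` Pow {- int N..int N}"
  proof (rule subsetI, elim rangeE)
    fix w and rw :: config assume "rw = r w"
    then show "rw \<in> (\<lambda>A i. i \<in> A) ` Pow {- int N..int N}"
      unfolding r_def by (intro image_eqI[of _ _ "{i \<in> {- int N..int N}. w i}"]) auto
  qed
  then have "finite (range r)" by (rule finite_subset) simp
  moreover have "range c \<subseteq> c ` range r" using cr by auto
  ultimately have fin: "finite (range c)" using finite_subset by blast
  define M where "M = nat (Max (abs ` range c))"
  have "\<bar>c w\<bar> \<le> int M" for w
  proof -
    have "\<bar>c w\<bar> \<le> Max (abs ` range c)" using fin by (intro Max_ge) auto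
    then show ?thesis unfolding M_def by linarith
  qed
  then show ?thesis using that by blast
qed

theorem mainTheorem1:
  shows "topological_full_group \<subseteq> brin_thompson_2V"
proof
  fix f assume "f \<in> topological_full_group"
  then obtain c where hom: "homeomorphic_map cantor_top cantor_top f"
    and cc: "continuous_map cantor_top (discrete_topology UNIV) c"
    and fc: "\<And>x. f x = shift (c x) x"
    unfolding topological_full_group_def by blast
  obtain N where wN: "\<And>z w. (\<forall>i. \<bar>i\<bar> \<le> int N \<longrightarrow> w i = z i) \<Longrightarrow> c w = c z"
    using window[OF cc] by blast
  obtain M where bM: "\<And>w. \<bar>c w\<bar> \<le> int M"
    using bounded_c[of N c, OF wN] by blast
  define n where "n = N + M"
  define g where "g (u :: bool list) (v :: bool list) = (let k = c (cat_conf (\<lambda>_. False) u v (\<lambda>_. False));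
      j = nat (int (length u) + k) in (take j (u @ v), drop j (u @ v)))" for u v
  have "\<forall>x u v y. length u = n \<longrightarrow> length v = n + 1 \<longrightarrow>
              f (cat_conf x u v y) = cat_conf x (fst (g u v)) (snd (g u v)) y"
  proof (intro allI impI)
    fix x and u v :: "bool list" and y assume lu: "length u = n" and lv: "length v = n + 1"
    define k where "k = c (cat_conf (\<lambda>_. False) u v (\<lambda>_. False))"
    have ck: "c (cat_conf x u v y) = k"
      unfolding k_def
    proof (rule wN, intro allI impI)
      fix i assume "\<bar>i\<bar> \<le> int N"
      then have "\<bar>i\<bar> \<le> int n" unfolding n_def by linarith
      then show "cat_conf x u v y i = cat_conf (\<lambda>_. False) u v (\<lambda>_. False) i"
        by (rule window_eq[OF lu lv])
    qed
    have kb: "\<bar>k\<bar> \<le> int M" using bM k_def by blast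
    have a1: "0 \<le> int (length u) + k" using kb lu unfolding n_def by linarith
    have a2: "int (length u) + k \<le> int (length (u @ v))" using kb lu lv unfolding n_def by simp
    show "f (cat_conf x u v y) = cat_conf x (fst (g u v)) (snd (g u v)) y"
      unfolding fc ck g_def k_def[symmetric] Let_def
      using shift_cat[OF a1 a2] by simp
  qed
  then show "f \<in> brin_thompson_2V"
    unfolding brin_thompson_2V_def using hom by blast
qed

end
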